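(* A graph $G$ is a pseudo-cograph if and only if every induced subgraph of $G$ is a pseudo-cograph.
   Context: Graphs finite, simple, undirected; $G-v$ is $G$ with $v$ deleted; the join of vertex-disjoint graphs adds all edges between them to the disjoint union; a cograph is a graph without induced $P_4$. $G$ is a pseudo-cograph if $|V(G)|\le2$ or there are induced subgraphs $G_1,G_2$ of $G$ and $v\in V(G)$ with (F1) $V(G)=V(G_1)\cup V(G_2)$, $V(G_1)\cap V(G_2)=\{v\}$, $|V(G_1)|,|V(G_2)|>1$; (F2) $G_1,G_2$ are cographs; (F3) $G-v$ is the join or the disjoint union of $G_1-v$ and $G_2-v$. *)

theory Defs
  imports Main
begin

text \<open>The induced
subgraph on W \<subseteq> V is (W, E): E is only ever consulted on vertices of W.\<close>

definition graph :: "'a set \<Rightarrow> ('a \<Rightarrow> 'a \<Rightarrow> bool) \<Rightarrow> bool" where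
  "graph V E \<longleftrightarrow> finite V \<and> (\<forall>x\<in>V. \<forall>y\<in>V. E x y \<longleftrightarrow> E y x) \<and> (\<forall>x\<in>V. \<not> E x x)"

definition cograph :: "'a set \<Rightarrow> ('a \<Rightarrow> 'a \<Rightarrow> bool) \<Rightarrow> bool" where
  "cograph V E \<longleftrightarrow> \<not> (\<exists>a\<in>V. \<exists>b\<in>V. \<exists>c\<in>V. \<exists>d\<in>V. distinct [a, b, c, d] \<and>
      E a b \<and> E b c \<and> E c d \<and> \<not> E a c \<and> \<not> E b d \<and> \<not> E a d)"

text \<open>(F3): G - v is the join (all edges between the two parts) or the disjoint
union (no edges between the two parts) of G1 - v and G2 - v; the edges inside
each part agree automatically since G1, G2 are induced subgraphs.\<close>
definition pseudo_cograph :: "'a set \<Rightarrow> ('a \<Rightarrow> 'a \<Rightarrow> bool) \<Rightarrow> bool" where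
  "pseudo_cograph V E \<longleftrightarrow> card V \<le> 2 \<or>
     (\<exists>V1 V2 v. V1 \<subseteq> V \<and> V2 \<subseteq> V \<and> v \<in> V \<and>
        V = V1 \<union> V2 \<and> V1 \<inter> V2 = {v} \<and> card V1 > 1 \<and> card V2 > 1 \<and>
        cograph V1 E \<and> cograph V2 E \<and>
        ((\<forall>x\<in>V1 - {v}. \<forall>y\<in>V2 - {v}. E x y) \<or>
         (\<forall>x\<in>V1 - {v}. \<forall>y\<in>V2 - {v}. \<not> E x y)))"

end

theory Submission
  imports Defs
begin

definition splt :: "'a set \<Rightarrow> ('a \<Rightarrow> 'a \<Rightarrow> bool) \<Rightarrow> bool" where
  "splt W E \<longleftrightarrow> (\<exists>A B. A \<noteq> {} \<and> B \<noteq> {} \<and> A \<union> B = W \<and> A \<inter> B = {} \<and>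
     ((\<forall>a\<in>A. \<forall>b\<in>B. E a b) \<or> (\<forall>a\<in>A. \<forall>b\<in>B. \<not> E a b)))"

lemma cograph_subset: "cograph V E \<Longrightarrow> W \<subseteq> V \<Longrightarrow> cograph W E"
  unfolding cograph_def by blast

lemma cograph_compl:
  assumes sym: "\<forall>x\<in>W. \<forall>y\<in>W. E x y = E y x" and "cograph W E"
  shows "cograph W (\<lambda>x y. \<not> E x y)"
proof -
  { fix a b c d assume in4: "a\<in>W" "b\<in>W" "c\<in>W" "d\<in>W" and "distinct [a,b,c,d]"
      "\<not> E a b" "\<not> E b c" "\<not> E c d" "E a c" "E b d" "E a d"
    then have "distinct [c,a,d,b] \<and> E c a \<and> E a d \<and> E d b \<and> \<not> E c d \<and> \<not> E a b \<and> \<not> E c b"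
      using sym by auto
    then have False using assms(2) in4 unfolding cograph_def by blast }
  then show ?thesis unfolding cograph_def by blast
qed

lemma split_step_aux:
  assumes sym: "\<forall>x\<in>W. \<forall>y\<in>W. E x y = E y x" and cog: "cograph W E"
    and u: "u \<in> W" and AB: "A \<union> B = W - {u}" "A \<inter> B = {}" "A \<noteq> {}" "B \<noteq> {}"
    and noedge: "\<forall>a\<in>A. \<forall>b\<in>B. \<not> E a b"
    and w: "w \<in> A" "\<not> E u w"
  shows "splt W E"
proof (cases "\<forall>z\<in>B. \<not> E u z")
  case True
  have "\<forall>a\<in>B. \<forall>b\<in>A \<union> {u}. \<not> E a b"
    using True noedge sym AB u by blast
  moreover have "B \<union> (A \<union> {u}) = W" "B \<inter> (A \<union> {u}) = {}" using AB u by auto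
  ultimately show ?thesis unfolding splt_def using AB
    by (metis Un_empty insert_not_empty sup_commute)
next
  case False
  then obtain z where z: "z \<in> B" "E u z" by blast
  define M where "M = {y\<in>A. \<not> E u y}"
  have Mne: "M \<noteq> {}" using w M_def by blast
  have uM: "u \<notin> M" using AB M_def by blast
  have cross: "\<forall>y\<in>M. \<forall>t\<in>W - M. \<not> E y t"
  proof (intro ballI)
    fix y t assume y: "y \<in> M" and t: "t \<in> W - M"
    show "\<not> E y t"
    proof (cases "t = u")
      case True then show ?thesis using sym y M_def u AB by auto
    next
      case tu: False
      show ?thesis
      proof (cases "t \<in> B")
        case True then show ?thesis using noedge y M_def by auto
      next
        case False
        then have tA: "t \<in> A" "E u t" using t tu AB M_def by auto
        show ?thesis
        proof
          assume Eyt: "E y t"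
          have yA: "y \<in> A" "\<not> E u y" using y M_def by auto
          have inW: "y \<in> W" "t \<in> W" "z \<in> W" using yA tA z AB by auto
          have "distinct [y,t,u,z]" using yA tA z AB by auto
          moreover have "E y t \<and> E t u \<and> E u z \<and> \<not> E y u \<and> \<not> E t z \<and> \<not> E y z"
            using Eyt tA z yA noedge sym inW u by auto
          ultimately show False using cog inW u unfolding cograph_def by blast
        qed
      qed
    qed
  qed
  have "M \<union> (W - M) = W" "M \<inter> (W - M) = {}" "W - M \<noteq> {}"
    using M_def AB u uM by auto
  then show ?thesis unfolding splt_def using Mne cross by blast
qed

lemma split_step:
  assumes sym: "\<forall>x\<in>W. \<forall>y\<in>W. E x y = E y x" and cog: "cograph W E"
    and u: "u \<in> W" and AB: "A \<union> B = W - {u}" "A \<inter> B = {}" "A \<noteq> {}" "B \<noteq> {}"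
    and noedge: "\<forall>a\<in>A. \<forall>b\<in>B. \<not> E a b"
  shows "splt W E"
proof (cases "\<forall>y\<in>W-{u}. E u y")
  case True
  have "{u} \<union> (W-{u}) = W" "{u} \<inter> (W-{u}) = {}" "W - {u} \<noteq> {}" using u AB by auto
  then show ?thesis unfolding splt_def using True
    by (rule_tac x="{u}" in exI, rule_tac x="W-{u}" in exI) simp
next
  case False
  then obtain w where w: "w \<in> W - {u}" "\<not> E u w" by blast
  show ?thesis
  proof (cases "w \<in> A")
    case True then show ?thesis using split_step_aux[OF sym cog u AB noedge] w by blast
  next
    case False
    then have "w \<in> B" using w AB by blast
    moreover have "\<forall>a\<in>B. \<forall>b\<in>A. \<not> E a b" using noedge sym AB by blast
    moreover have "B \<union> A = W - {u}" "B \<inter> A = {}" using AB by auto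
    ultimately show ?thesis using split_step_aux[OF sym cog u _ _ AB(4) AB(3)] w by blast
  qed
qed

lemma splt_compl: "splt W (\<lambda>x y. \<not> E x y) \<Longrightarrow> splt W E"
  unfolding splt_def by auto

lemma cograph_split:
  "finite W \<Longrightarrow> card W \<ge> 2 \<Longrightarrow> \<forall>x\<in>W. \<forall>y\<in>W. E x y = E y x \<Longrightarrow> cograph W E \<Longrightarrow> splt W E"
proof (induction "card W" arbitrary: W rule: less_induct)
  case less
  obtain u where u: "u \<in> W" using less.prems(2) by fastforce
  define W' where "W' = W - {u}"
  have cW': "card W' = card W - 1" using W'_def u less.prems(1) by simp
  show ?case
  proof (cases "card W' = 1")
    case True
    then obtain w where "W' = {w}" by (meson card_1_singletonE)
    then have "{u} \<union> {w} = W" "{u} \<inter> {w} = {}" using W'_def u by auto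
    then show ?thesis unfolding splt_def by blast
  next
    case False
    then have "card W' \<ge> 2" using cW' less.prems(2) by linarith
    moreover have "card W' < card W" using cW' less.prems(2) by linarith
    moreover have "finite W'" "\<forall>x\<in>W'. \<forall>y\<in>W'. E x y = E y x" "cograph W' E"
      using less.prems W'_def cograph_subset[of W E W'] by auto
    ultimately have "splt W' E" using less.hyps by blast
    then obtain A B where AB: "A \<noteq> {}" "B \<noteq> {}" "A \<union> B = W - {u}" "A \<inter> B = {}"
      and uni: "(\<forall>a\<in>A. \<forall>b\<in>B. E a b) \<or> (\<forall>a\<in>A. \<forall>b\<in>B. \<not> E a b)"
      unfolding splt_def W'_def by blast
    from uni show ?thesis
    proof
      assume "\<forall>a\<in>A. \<forall>b\<in>B. E a b"
      then have "\<forall>a\<in>A. \<forall>b\<in>B. \<not> (\<lambda>x y. \<not> E x y) a b" by simp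
      moreover have "\<forall>x\<in>W. \<forall>y\<in>W. (\<not> E x y) = (\<not> E y x)" using less.prems by auto
      ultimately have "splt W (\<lambda>x y. \<not> E x y)"
        using split_step[of W "\<lambda>x y. \<not> E x y" u A B] cograph_compl[of W E] less.prems u AB
        by blast
      then show ?thesis by (rule splt_compl)
    next
      assume "\<forall>a\<in>A. \<forall>b\<in>B. \<not> E a b"
      then show ?thesis using split_step[of W E u A B] less.prems u AB by blast
    qed
  qed
qed

lemma cograph_insert:
  assumes sym: "\<forall>x\<in>insert a B. \<forall>y\<in>insert a B. E x y = E y x" and cog: "cograph B E"
    and uni: "(\<forall>b\<in>B. E a b) \<or> (\<forall>b\<in>B. \<not> E a b)"
  shows "cograph (insert a B) E"
  unfolding cograph_def
proof
  assume "\<exists>p\<in>insert a B. \<exists>q\<in>insert a B. \<exists>r\<in>insert a B. \<exists>s\<in>insert a B. distinct [p, q, r, s] \<and>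
      E p q \<and> E q r \<and> E r s \<and> \<not> E p r \<and> \<not> E q s \<and> \<not> E p s"
  then obtain p q r s where in4: "p\<in>insert a B" "q\<in>insert a B" "r\<in>insert a B" "s\<in>insert a B"
    and P: "distinct [p, q, r, s]" "E p q" "E q r" "E r s" "\<not> E p r" "\<not> E q s" "\<not> E p s" by blast
  show False
  proof (cases "a \<in> {p,q,r,s}")
    case False
    then have "p\<in>B" "q\<in>B" "r\<in>B" "s\<in>B" using in4 by auto
    then show False using cog P unfolding cograph_def by blast
  next
    case True
    have sy: "E x y = E y x" if "x \<in> insert a B" "y \<in> insert a B" for x y using sym that by blast
    from True show False
    proof (elim insertE)
      assume "a = p" then show False using uni P in4 sy by (metis distinct_length_2_or_more insertE)
    next
      assume "a = q" then show False using uni P in4 sy by (metis distinct_length_2_or_more insertE)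
    next
      assume "a = r" then show False using uni P in4 sy by (metis distinct_length_2_or_more distinct.simps(2) insertE list.set_intros(1))
    next
      assume "a = s" then show False using uni P in4 sy by (metis distinct_length_2_or_more distinct.simps(2) insertE list.set_intros(1) list.set_intros(2))
    next
      assume "a \<in> {}" then show False by simp
    qed
  qed
qed


lemma pseudo_from_parts_aux:
  assumes fin: "finite W" and sym: "\<forall>x\<in>W. \<forall>y\<in>W. E x y = E y x"
    and AB: "A \<union> B = W" "A \<inter> B = {}" "card A \<ge> 2" "B \<noteq> {}"
    and uni: "(\<forall>a\<in>A. \<forall>b\<in>B. E a b) \<or> (\<forall>a\<in>A. \<forall>b\<in>B. \<not> E a b)"
    and cA: "cograph A E" and cB: "cograph B E"
  shows "pseudo_cograph W E"
proof -
  obtain a where a: "a \<in> A" using AB(3) by fastforce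
  have finB: "finite B" using fin AB by auto
  have aB: "a \<notin> B" using a AB by auto
  have c2: "card (insert a B) > 1" using finB aB AB(4) by (simp add: card_gt_0_iff)
  have uniB: "(\<forall>b\<in>B. E a b) \<or> (\<forall>b\<in>B. \<not> E a b)" using uni a by blast
  have cI: "cograph (insert a B) E"
    using cograph_insert[OF _ cB uniB] sym a AB by blast
  have cross: "(\<forall>x\<in>A - {a}. \<forall>y\<in>insert a B - {a}. E x y) \<or>
         (\<forall>x\<in>A - {a}. \<forall>y\<in>insert a B - {a}. \<not> E x y)" using uni by auto
  show ?thesis unfolding pseudo_cograph_def
    apply (rule disjI2)
    apply (rule exI[of _ A], rule exI[of _ "insert a B"], rule exI[of _ a])
    using AB a aB c2 cA cI cross by auto
qed

lemma pseudo_from_parts: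
  assumes fin: "finite W" and sym: "\<forall>x\<in>W. \<forall>y\<in>W. E x y = E y x"
    and AB: "A \<union> B = W" "A \<inter> B = {}" "A \<noteq> {}" "B \<noteq> {}" "card W \<ge> 3"
    and uni: "(\<forall>a\<in>A. \<forall>b\<in>B. E a b) \<or> (\<forall>a\<in>A. \<forall>b\<in>B. \<not> E a b)"
    and cA: "cograph A E" and cB: "cograph B E"
  shows "pseudo_cograph W E"
proof (cases "card A \<ge> 2")
  case True show ?thesis by (rule pseudo_from_parts_aux[OF fin sym AB(1,2) True AB(4) uni cA cB])
next
  case False
  have "card W = card A + card B" using AB fin card_Un_disjoint[of A B] by auto
  then have cB2: "card B \<ge> 2" using False AB(5) by linarith
  have uni': "(\<forall>a\<in>B. \<forall>b\<in>A. E a b) \<or> (\<forall>a\<in>B. \<forall>b\<in>A. \<not> E a b)"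
    using uni sym AB(1) by blast
  have "B \<union> A = W" "B \<inter> A = {}" using AB by auto
  then show ?thesis using pseudo_from_parts_aux[OF fin sym _ _ cB2 AB(3) uni' cB cA] by blast
qed

lemma cograph_pseudo:
  assumes fin: "finite W" and sym: "\<forall>x\<in>W. \<forall>y\<in>W. E x y = E y x"
    and c: "cograph W E" and "card W \<ge> 3"
  shows "pseudo_cograph W E"
proof -
  have "splt W E" using cograph_split[OF fin _ sym c] assms(4) by simp
  then obtain A B where AB: "A \<noteq> {}" "B \<noteq> {}" "A \<union> B = W" "A \<inter> B = {}"
      and uni: "(\<forall>a\<in>A. \<forall>b\<in>B. E a b) \<or> (\<forall>a\<in>A. \<forall>b\<in>B. \<not> E a b)"
    unfolding splt_def by blast
  show ?thesis using pseudo_from_parts[OF fin sym AB(3,4,1,2) assms(4) uni]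
      cograph_subset[OF c, of A] cograph_subset[OF c, of B] AB by blast
qed

theorem mainTheorem9:
  fixes V :: "'a set" and E :: "'a \<Rightarrow> 'a \<Rightarrow> bool"
  assumes "graph V E"
  shows "pseudo_cograph V E \<longleftrightarrow> (\<forall>W. W \<subseteq> V \<longrightarrow> pseudo_cograph W E)"
proof
  assume "\<forall>W. W \<subseteq> V \<longrightarrow> pseudo_cograph W E" then show "pseudo_cograph V E" by blast
next
  assume pV: "pseudo_cograph V E"
  have finV: "finite V" and symV: "\<forall>x\<in>V. \<forall>y\<in>V. E x y = E y x"
    using assms unfolding graph_def by auto
  show "\<forall>W. W \<subseteq> V \<longrightarrow> pseudo_cograph W E"
  proof (intro allI impI)
    fix W assume WV: "W \<subseteq> V"
    have finW: "finite W" using WV finV finite_subset by blast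
    have symW: "\<forall>x\<in>W. \<forall>y\<in>W. E x y = E y x" using symV WV by blast
    show "pseudo_cograph W E"
    proof (cases "card W \<le> 2")
      case True then show ?thesis unfolding pseudo_cograph_def by blast
    next
      case False
      then have W3: "card W \<ge> 3" by simp
      have "card V > 2" using card_mono[OF finV WV] False by linarith
      then obtain V1 V2 v where D: "V1 \<subseteq> V" "V2 \<subseteq> V" "v \<in> V"
        "V = V1 \<union> V2" "V1 \<inter> V2 = {v}" "card V1 > 1" "card V2 > 1"
        "cograph V1 E" "cograph V2 E"
        and cr: "(\<forall>x\<in>V1 - {v}. \<forall>y\<in>V2 - {v}. E x y) \<or>
         (\<forall>x\<in>V1 - {v}. \<forall>y\<in>V2 - {v}. \<not> E x y)"
        using pV unfolding pseudo_cograph_def by auto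
      define W1 where "W1 = W \<inter> V1"
      define W2 where "W2 = W \<inter> V2"
      have W12: "W = W1 \<union> W2" using W1_def W2_def D WV by auto
      have cW1: "cograph W1 E" using cograph_subset[OF D(8)] W1_def by auto
      have cW2: "cograph W2 E" using cograph_subset[OF D(9)] W2_def by auto
      show ?thesis
      proof (cases "W \<subseteq> V1 \<or> W \<subseteq> V2")
        case True
        then have "cograph W E" using cograph_subset D(8,9) by blast
        then show ?thesis using cograph_pseudo[OF finW symW _ W3] by blast
      next
        case nsub: False
        have ne: "W1 - {v} \<noteq> {}" "W2 - {v} \<noteq> {}"
        proof -
          show "W1 - {v} \<noteq> {}"
          proof
            assume "W1 - {v} = {}"
            then have "W \<subseteq> V2" using W12 W2_def D(5) W1_def by blast
            then show False using nsub by blast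
          qed
          show "W2 - {v} \<noteq> {}"
          proof
            assume "W2 - {v} = {}"
            then have "W \<subseteq> V1" using W12 W1_def D(5) W2_def by blast
            then show False using nsub by blast
          qed
        qed
        have cr': "(\<forall>x\<in>W1 - {v}. \<forall>y\<in>W2 - {v}. E x y) \<or>
         (\<forall>x\<in>W1 - {v}. \<forall>y\<in>W2 - {v}. \<not> E x y)" using cr W1_def W2_def by blast
        show ?thesis
        proof (cases "v \<in> W")
          case True
          have "W1 \<inter> W2 = {v}" using True D(5) W1_def W2_def by auto
          moreover have "card W1 > 1"
          proof -
            obtain x where "x \<in> W1" "x \<noteq> v" using ne by blast
            moreover have "v \<in> W1" using True D(5) W1_def by auto
            moreover have "finite W1" using finW W1_def by auto
            ultimately show ?thesis using card_le_Suc0_iff_eq[of W1] by force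
          qed
          moreover have "card W2 > 1"
          proof -
            obtain x where "x \<in> W2" "x \<noteq> v" using ne by blast
            moreover have "v \<in> W2" using True D(5) W2_def by auto
            moreover have "finite W2" using finW W2_def by auto
            ultimately show ?thesis using card_le_Suc0_iff_eq[of W2] by force
          qed
          moreover have "W1 \<subseteq> W" "W2 \<subseteq> W" using W1_def W2_def by auto
          ultimately show ?thesis unfolding pseudo_cograph_def
            apply (intro disjI2)
            apply (rule exI[of _ W1], rule exI[of _ W2], rule exI[of _ v])
            using True W12 cW1 cW2 cr' by simp
        next
          case False
          have "W1 \<inter> W2 = {}" using False D(5) W1_def W2_def by auto
          moreover have "W1 - {v} = W1" "W2 - {v} = W2" using False W1_def W2_def by auto
          ultimately show ?thesis
            using pseudo_from_parts[OF finW symW W12[symmetric] _ _ _ W3 _ cW1 cW2] ne cr' by auto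
        qed
      qed
    qed
  qed
qed

end
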